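(* Let $d\ge1$ be an integer and let $\chi^2(d)$ denote a chi-square random variable with $d$ degrees of freedom. For every $t>0$, with $Z_d(t)=t-d\log\!\big(1+\tfrac td\big)$, $$\mathbb P\big(\chi^2(d)\ge d+t\big)\le\frac{1}{\sqrt{2\pi Z_d(t)}}\exp\!\Big(-\frac{Z_d(t)}{2}\Big).$$ *)

theory Defs
  imports "HOL-Probability.Probability"
begin

definition chi_square_density :: "nat \<Rightarrow> real \<Rightarrow> real" where
  "chi_square_density d x =
     (if x > 0 then x powr (real d / 2 - 1) * exp (- x / 2) / (2 powr (real d / 2) * Gamma (real d / 2))
      else 0)"

end

theory Submission imports Defs "HOL-Real_Asymp.Real_Asymp" begin

lemma dup_real:
  fixes x :: real assumes "x > 0"
  shows "Gamma x * Gamma (x + 1/2) = exp ((1 - 2*x) * ln 2) * sqrt pi * Gamma (2*x)"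
proof -
  have a: "complex_of_real x \<notin> \<int>\<^sub>\<le>\<^sub>0" using assms by (auto elim!: nonpos_Ints_cases simp: complex_eq_iff)
  have b: "complex_of_real x + 1/2 \<notin> \<int>\<^sub>\<le>\<^sub>0"
  proof
    assume "complex_of_real x + 1/2 \<in> \<int>\<^sub>\<le>\<^sub>0"
    then have "complex_of_real (x + 1/2) \<in> \<int>\<^sub>\<le>\<^sub>0" by simp
    then show False using assms by (auto elim!: nonpos_Ints_cases simp: complex_eq_iff simp del: of_real_add)
  qed
  have "complex_of_real (Gamma x * Gamma (x + 1/2)) = complex_of_real (exp ((1 - 2*x) * ln 2) * sqrt pi * Gamma (2*x))"
    using Gamma_legendre_duplication[OF a b]
    by (simp add: Gamma_complex_of_real[symmetric] exp_of_real[symmetric])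
  then show ?thesis by (simp only: of_real_eq_iff)
qed

lemma ln_lower1: fixes u :: real assumes "u \<ge> 0" shows "2*u/(2+u) \<le> ln (1+u)"
proof -
  have "(\<lambda>u. ln (1+u) - 2*u/(2+u)) 0 \<le> (\<lambda>u. ln (1+u) - 2*u/(2+u)) u"
  proof (rule DERIV_nonneg_imp_nondecreasing[OF assms])
    fix x :: real assume x: "0 \<le> x" "x \<le> u"
    show "\<exists>y. ((\<lambda>u. ln (1+u) - 2*u/(2+u)) has_real_derivative y) (at x) \<and> 0 \<le> y"
      apply (rule exI[of _ "1/(1+x) - (2*(2+x) - 2*x)/(2+x)^2"])
      apply (rule conjI)
      using x apply (auto intro!: derivative_eq_intros simp: power2_eq_square)[1]
      using x apply (simp add: field_simps power2_eq_square le_divide_eq divide_le_eq)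
      done
  qed
  then show ?thesis by simp
qed

lemma ln_upper1: fixes u :: real assumes "u \<ge> 0" shows "ln (1+u) \<le> u*(2+u)/(2*(1+u))"
proof -
  have "(\<lambda>u. u*(2+u)/(2*(1+u)) - ln (1+u)) 0 \<le> (\<lambda>u. u*(2+u)/(2*(1+u)) - ln (1+u)) u"
  proof (rule DERIV_nonneg_imp_nondecreasing[OF assms])
    fix x :: real assume x: "0 \<le> x" "x \<le> u"
    show "\<exists>y. ((\<lambda>u. u*(2+u)/(2*(1+u)) - ln (1+u)) has_real_derivative y) (at x) \<and> 0 \<le> y"
      apply (rule exI[of _ "((1*(2+x) + x*1)*(2*(1+x)) - x*(2+x)*2)/(2*(1+x))^2 - 1/(1+x)"])
      apply (rule conjI)
      using x apply (auto intro!: derivative_eq_intros simp: power2_eq_square)[1]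
      using x apply (simp add: field_simps power2_eq_square le_divide_eq divide_le_eq)
      apply (smt (verit) mult_nonneg_nonneg)
      done
  qed
  then show ?thesis by simp
qed

lemma ln_lower2: fixes u :: real assumes "u \<ge> 0" shows "u - u^2/2 \<le> ln (1+u)"
proof -
  have "(\<lambda>u. ln (1+u) - u + u^2/2) 0 \<le> (\<lambda>u. ln (1+u) - u + u^2/2) u"
  proof (rule DERIV_nonneg_imp_nondecreasing[OF assms])
    fix x :: real assume x: "0 \<le> x" "x \<le> u"
    show "\<exists>y. ((\<lambda>u. ln (1+u) - u + u^2/2) has_real_derivative y) (at x) \<and> 0 \<le> y"
      apply (rule exI[of _ "1/(1+x) - 1 + x"])
      apply (rule conjI)
      using x apply (auto intro!: derivative_eq_intros simp: power2_eq_square)[1]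
      using x apply (simp add: field_simps power2_eq_square le_divide_eq divide_le_eq)
      done
  qed
  then show ?thesis by simp
qed

definition Gs :: "real \<Rightarrow> real" where
  "Gs x = ln (Gamma x) - (x - 1/2) * ln x + x"

lemma Gamma_plus1_real: "x > 0 \<Longrightarrow> Gamma (x + 1) = x * Gamma (x::real)"
  by (rule Gamma_plus1) (auto elim!: nonpos_Ints_cases)

lemma Gs_step: fixes x :: real assumes x: "x > 0"
  shows "Gs (x+1) - Gs x = 1 - (x + 1/2) * ln (1 + 1/x)"
proof -
  have h1: "ln (Gamma (x+1)) = ln x + ln (Gamma x)" 
  proof -
    have "Gamma (x+1) = x * Gamma x" using x by (rule Gamma_plus1_real)
    moreover have "ln (x * Gamma x) = ln x + ln (Gamma x)" using x by (intro ln_mult_pos) auto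
    ultimately show ?thesis by simp
  qed
  have "1 + 1/x = (x+1)/x" using x by (simp add: field_simps)
  then have h2: "ln (1 + 1/x) = ln (x+1) - ln x" using x by (simp add: ln_divide_pos)
  show ?thesis unfolding Gs_def h1 h2 by (simp add: algebra_simps)
qed

lemma Gs_step_le: fixes x :: real assumes x: "x > 0" shows "Gs (x+1) \<le> Gs x"
proof -
  have "2*(1/x)/(2+1/x) \<le> ln (1 + 1/x)" using x by (intro ln_lower1) auto
  moreover have "2*(1/x)/(2+1/x) = 1 / (x + 1/2)" using x by (simp add: field_simps)
  ultimately have "1 \<le> (x + 1/2) * ln (1 + 1/x)" using x by (simp add: field_simps)
  then show ?thesis using Gs_step[OF x] by simp
qed

lemma Gs_step_ge: fixes x :: real assumes x: "x > 0"
  shows "Gs x - (1/(4*x) - 1/(4*(x+1))) \<le> Gs (x+1)"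
proof -
  have "ln (1 + 1/x) \<le> (1/x)*(2+1/x)/(2*(1+1/x))" using x by (intro ln_upper1) auto
  then have "(x + 1/2) * ln (1 + 1/x) \<le> (x + 1/2) * ((1/x)*(2+1/x)/(2*(1+1/x)))"
    using x by (intro mult_left_mono) auto
  also have "\<dots> = 1 + (1/(4*x) - 1/(4*(x+1)))" using x by (simp add: divide_simps; simp add: algebra_simps)
  finally show ?thesis using Gs_step[OF x] by simp
qed

lemma Gs_lower_n: fixes x :: real assumes x: "x > 0"
  shows "Gs x - 1/(4*x) + 1/(4*(x + real n)) \<le> Gs (x + real n)"
proof (induction n)
  case 0 then show ?case by simp
next
  case (Suc n)
  have "Gs (x + real n) - (1/(4*(x + real n)) - 1/(4*((x + real n)+1))) \<le> Gs ((x + real n)+1)"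
    using x by (intro Gs_step_ge) auto
  then show ?case using Suc by (simp add: algebra_simps)
qed

lemma Gs_dec_n: fixes x :: real assumes x: "x > 0"
  shows "Gs (x + real (Suc n)) \<le> Gs (x + real n)"
  using Gs_step_le[of "x + real n"] x by (simp add: algebra_simps)

lemma Gs_dup: fixes z :: real assumes z: "z > 0"
  shows "Gs z + Gs (z + 1/2) = Gs (2*z) + ln (2*pi)/2 + 1/2 - z * ln (1 + 1/(2*z))"
proof -
  have "ln (Gamma z * Gamma (z + 1/2)) = ln (exp ((1 - 2*z) * ln 2) * sqrt pi * Gamma (2*z))"
    using dup_real[OF z] by simp
  have e: "ln (Gamma z) + ln (Gamma (z + 1/2)) = (1 - 2*z) * ln 2 + ln pi / 2 + ln (Gamma (2*z))"
  proof -
    have "Gamma z > 0" "Gamma (z+1/2) > 0" "Gamma (2*z) > 0" using z by auto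
    then show ?thesis using \<open>ln (Gamma z * Gamma (z + 1/2)) = _\<close>
      by (simp add: ln_mult ln_sqrt)
  qed
  have "1 + 1/(2*z) = (z + 1/2) / z" using z by (simp add: field_simps)
  then have l1: "ln (1 + 1/(2*z)) = ln (z + 1/2) - ln z" using z by (simp add: ln_div)
  have l2: "ln (2*z) = ln 2 + ln z" using z by (simp add: ln_mult)
  have l3: "ln (2*pi) = ln 2 + ln pi" by (simp add: ln_mult)
  have l1': "z * ln (1 + 1/(2*z)) = z * ln (z + 1/2) - z * ln z" unfolding l1 by (simp add: right_diff_distrib)
  show ?thesis unfolding Gs_def l1' l2 l3 using e by (simp add: algebra_simps add_divide_distrib)
qed

lemma lnGamma_mid: fixes x y :: real assumes "x > 0" "y > 0"
  shows "ln (Gamma ((x + y)/2)) \<le> (ln (Gamma x) + ln (Gamma y))/2"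
proof -
  have "(ln \<circ> Gamma) ((1 - 1/2) *\<^sub>R x + (1/2) *\<^sub>R y) \<le> (1 - 1/2) * (ln \<circ> Gamma) x + (1/2) * (ln \<circ> Gamma) y"
    by (rule convex_onD[OF log_convex_Gamma_real]) (use assms in auto)
  moreover have e: "(1 - 1/2) *\<^sub>R x + (1/2) *\<^sub>R y = (x+y)/2" by simp
  ultimately have "ln (Gamma ((x+y)/2)) \<le> (1 - 1/2) * ln (Gamma x) + (1/2) * ln (Gamma y)"
    unfolding o_def e by simp
  then show ?thesis by argo
qed

lemma Gs_half_bounds: fixes m :: real assumes m: "m > 0"
  shows "1/2 - (m + 1/2) * ln (1 + 1/(2*m)) \<le> Gs (m + 1/2) - Gs m"
    and "Gs (m + 1/2) - Gs m \<le> 1/2 - m * ln (1 + 1/(2*m))"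
proof -
  have "1 + 1/(2*m) = (m + 1/2) / m" using m by (simp add: field_simps)
  then have l1: "ln (1 + 1/(2*m)) = ln (m + 1/2) - ln m" using m by (simp add: ln_divide_pos)
  have g1: "ln (Gamma (m+1)) = ln m + ln (Gamma m)"
  proof -
    have "Gamma (m+1) = m * Gamma m" using m by (rule Gamma_plus1_real)
    moreover have "ln (m * Gamma m) = ln m + ln (Gamma m)" using m by (intro ln_mult_pos) auto
    ultimately show ?thesis by simp
  qed
  have g2: "ln (Gamma (m+1/2+1)) = ln (m+1/2) + ln (Gamma (m+1/2))"
  proof -
    have "Gamma (m+1/2+1) = (m+1/2) * Gamma (m+1/2)" using m by (intro Gamma_plus1_real) auto
    moreover have "ln ((m+1/2) * Gamma (m+1/2)) = ln (m+1/2) + ln (Gamma (m+1/2))" using m by (intro ln_mult_pos) auto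
    ultimately show ?thesis by simp
  qed
  have c1: "ln (Gamma ((m + (m+1))/2)) \<le> (ln (Gamma m) + ln (Gamma (m+1)))/2"
    using m by (intro lnGamma_mid) auto
  have c2: "ln (Gamma (((m+1/2) + (m+1/2+1))/2)) \<le> (ln (Gamma (m+1/2)) + ln (Gamma (m+1/2+1)))/2"
    using m by (intro lnGamma_mid) auto
  have e1: "(m + (m+1))/2 = m + 1/2" "((m+1/2) + (m+1/2+1))/2 = m + 1" by simp_all
  have U: "ln (Gamma (m + 1/2)) \<le> ln (Gamma m) + ln m / 2" using c1[unfolded e1 g1] by argo
  have L: "ln (Gamma m) + ln m - ln (m+1/2) / 2 \<le> ln (Gamma (m + 1/2))" using c2[unfolded e1 g1 g2] by argo
  have d: "Gs (m + 1/2) - Gs m = ln (Gamma (m + 1/2)) - ln (Gamma m) - m * ln (m + 1/2) + (m - 1/2) * ln m + 1/2"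
    unfolding Gs_def by (simp add: algebra_simps)
  show "1/2 - (m + 1/2) * ln (1 + 1/(2*m)) \<le> Gs (m + 1/2) - Gs m"
    unfolding d l1 using L by (simp add: algebra_simps)
  show "Gs (m + 1/2) - Gs m \<le> 1/2 - m * ln (1 + 1/(2*m))"
    unfolding d l1 using U by (simp add: algebra_simps)
qed

lemma lim1: "(\<lambda>n. 1/2 - (real n + 1 + 1/2) * ln (1 + 1/(2*(real n + 1)))) \<longlonglongrightarrow> 0"
  by real_asymp

lemma lim2: "(\<lambda>n. 1/2 - (real n + 1) * ln (1 + 1/(2*(real n + 1)))) \<longlonglongrightarrow> 0"
  by real_asymp

lemma Gs_stirling_seq:
  shows "ln (2*pi)/2 \<le> Gs (real n + 1) \<and> ln (2*pi)/2 \<le> Gs (real n + 1/2)"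
proof -
  define a where "a n = Gs (real n + 1)" for n
  define b where "b n = Gs (real n + 1/2)" for n
  have da: "decseq a"
    by (rule decseq_SucI) (use Gs_dec_n[of 1] in \<open>simp add: a_def add.commute\<close>)
  have db: "decseq b"
    by (rule decseq_SucI) (use Gs_dec_n[of "1/2"] in \<open>simp add: b_def add.commute\<close>)
  have ba: "\<forall>i. Gs 1 - 1/4 \<le> a i"
  proof
    fix i
    have "Gs 1 - 1/(4*1) + 1/(4*(1 + real i)) \<le> Gs (1 + real i)" by (rule Gs_lower_n) simp
    moreover have "0 \<le> 1/(4*(1 + real i))" by simp
    ultimately have "Gs 1 - 1/4 \<le> Gs (1 + real i)" by argo
    then show "Gs 1 - 1/4 \<le> a i" unfolding a_def by (simp add: add.commute)
  qed
  have bb: "\<forall>i. Gs (1/2) - 1/2 \<le> b i"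
  proof
    fix i
    have "Gs (1/2) - 1/(4*(1/2)) + 1/(4*(1/2 + real i)) \<le> Gs (1/2 + real i)" by (rule Gs_lower_n) simp
    moreover have "0 \<le> 1/(4*(1/2 + real i))" by simp
    ultimately have "Gs (1/2) - 1/2 \<le> Gs (1/2 + real i)" by argo
    then show "Gs (1/2) - 1/2 \<le> b i" unfolding b_def by (simp add: add.commute)
  qed
  obtain La where La: "a \<longlonglongrightarrow> La" "\<forall>i. La \<le> a i" using decseq_convergent[OF da ba] by blast
  obtain Lb where Lb: "b \<longlonglongrightarrow> Lb" "\<forall>i. Lb \<le> b i" using decseq_convergent[OF db bb] by blast
  have bS: "(\<lambda>n. b (Suc n)) \<longlonglongrightarrow> Lb" using Lb(1) by (rule LIMSEQ_Suc)
  have diff1: "(\<lambda>n. b (Suc n) - a n) \<longlonglongrightarrow> Lb - La" using bS La(1) by (rule tendsto_diff)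
  have diff0: "(\<lambda>n. b (Suc n) - a n) \<longlonglongrightarrow> 0"
  proof (rule tendsto_sandwich[OF _ _ lim1 lim2])
    show "\<forall>\<^sub>F n in sequentially. 1/2 - (real n + 1 + 1/2) * ln (1 + 1/(2*(real n + 1))) \<le> b (Suc n) - a n"
    proof (rule always_eventually, rule allI)
      fix n
      have "1/2 - ((real n + 1) + 1/2) * ln (1 + 1/(2*(real n + 1))) \<le> Gs ((real n + 1) + 1/2) - Gs (real n + 1)"
        by (rule Gs_half_bounds) simp
      then show "1/2 - (real n + 1 + 1/2) * ln (1 + 1/(2*(real n + 1))) \<le> b (Suc n) - a n"
        unfolding a_def b_def by (simp add: add_ac)
    qed
    show "\<forall>\<^sub>F n in sequentially. b (Suc n) - a n \<le> 1/2 - (real n + 1) * ln (1 + 1/(2*(real n + 1)))"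
    proof (rule always_eventually, rule allI)
      fix n
      have "Gs ((real n + 1) + 1/2) - Gs (real n + 1) \<le> 1/2 - (real n + 1) * ln (1 + 1/(2*(real n + 1)))"
        by (rule Gs_half_bounds) simp
      then show "b (Suc n) - a n \<le> 1/2 - (real n + 1) * ln (1 + 1/(2*(real n + 1)))"
        unfolding a_def b_def by (simp add: add_ac)
    qed
  qed
  have eqL: "Lb = La" using LIMSEQ_unique[OF diff1 diff0] by simp
  have sm: "strict_mono (\<lambda>n::nat. 2*n+1)" by (rule strict_monoI) simp
  have a2: "(\<lambda>n. a (2*n+1)) \<longlonglongrightarrow> La" using LIMSEQ_subseq_LIMSEQ[OF La(1) sm] by (simp add: o_def)
  have dupn: "a n + b (Suc n) = a (2*n+1) + ln (2*pi)/2 + (1/2 - (real n + 1) * ln (1 + 1/(2*(real n + 1))))" for n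
  proof -
    have "Gs (real n + 1) + Gs ((real n + 1) + 1/2) = Gs (2*(real n + 1)) + ln (2*pi)/2 + 1/2 - (real n + 1) * ln (1 + 1/(2*(real n + 1)))"
      by (rule Gs_dup) simp
    moreover have "2*(real n + 1) = real (2*n+1) + 1" by simp
    ultimately show ?thesis unfolding a_def b_def by (simp add: add_ac)
  qed
  have l1: "(\<lambda>n. a n + b (Suc n)) \<longlonglongrightarrow> La + Lb" using La(1) bS by (rule tendsto_add)
  have l2: "(\<lambda>n. a (2*n+1) + ln (2*pi)/2 + (1/2 - (real n + 1) * ln (1 + 1/(2*(real n + 1))))) \<longlonglongrightarrow> La + ln (2*pi)/2 + 0"
    by (intro tendsto_add a2 tendsto_const lim2)
  have "La + Lb = La + ln (2*pi)/2 + 0" using LIMSEQ_unique[OF l1] l2 unfolding dupn by blast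
  then have "Lb = ln (2*pi)/2" "La = ln (2*pi)/2" using eqL by simp_all
  then show ?thesis using La(2) Lb(2) unfolding a_def b_def by metis
qed


lemma exp_integral_atLeast:
  fixes lam c B :: real assumes lam: "lam > 0" and B: "B \<ge> 0"
  shows "(\<integral>\<^sup>+x. ennreal (B * exp (-lam*(x-c))) * indicator {c..} x \<partial>lborel) = ennreal (B / lam)"
proof -
  have lim: "((\<lambda>x. - B / lam * exp (-lam*(x-c))) \<longlongrightarrow> 0) at_top"
  proof -
    have "filterlim (\<lambda>x. -lam*(x-c)) at_bot at_top"
      using lam by real_asymp
    then have "((\<lambda>x. exp (-lam*(x-c))) \<longlongrightarrow> 0) at_top"
      by (rule filterlim_compose[OF exp_at_bot])
    then have "((\<lambda>x. (- B / lam) * exp (-lam*(x-c))) \<longlongrightarrow> (- B / lam) * 0) at_top"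
      by (intro tendsto_mult tendsto_const)
    then show ?thesis by simp
  qed
  have "(\<integral>\<^sup>+x. ennreal (B * exp (-lam*(x-c))) * indicator {c..} x \<partial>lborel) = 0 - (- B / lam * exp (-lam*(c-c)))"
  proof (rule nn_integral_FTC_atLeast[OF _ _ _ lim])
    show "(\<lambda>x. B * exp (-lam*(x-c))) \<in> borel_measurable borel" by measurable
    fix x :: real assume "c \<le> x"
    show "((\<lambda>x. - B / lam * exp (-lam*(x-c))) has_real_derivative B * exp (-lam*(x-c))) (at x)"
      using lam by (auto intro!: derivative_eq_intros simp: field_simps)
    show "0 \<le> B * exp (-lam*(x-c))" using B by simp
  qed
  then show ?thesis by simp
qed

lemma tail_bound:
  fixes M :: "'a measure" and X :: "'a \<Rightarrow> real"
  assumes P: "prob_space M" and D: "distributed M lborel X (chi_square_density d)"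
    and lam: "lam > 0" and B: "B \<ge> 0"
    and bnd: "\<And>x. x \<ge> c \<Longrightarrow> chi_square_density d x \<le> B * exp (-lam*(x-c))"
  shows "measure M {\<omega> \<in> space M. X \<omega> \<ge> c} \<le> B / lam"
proof -
  interpret prob_space M by (rule P)
  have set: "X -` {c..} \<inter> space M = {\<omega> \<in> space M. X \<omega> \<ge> c}" by auto
  have "emeasure M {\<omega> \<in> space M. X \<omega> \<ge> c} = (\<integral>\<^sup>+x. ennreal (chi_square_density d x) * indicator {c..} x \<partial>lborel)"
    using distributed_emeasure[OF D, of "{c..}"] set by simp
  also have "\<dots> \<le> (\<integral>\<^sup>+x. ennreal (B * exp (-lam*(x-c))) * indicator {c..} x \<partial>lborel)"
  proof (intro nn_integral_mono)
    fix x
    show "ennreal (chi_square_density d x) * indicator {c..} x \<le> ennreal (B * exp (-lam*(x-c))) * indicator {c..} x"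
    proof (cases "c \<le> x")
      case True
      then show ?thesis using bnd[OF True] by (simp add: ennreal_leI)
    qed simp
  qed
  also have "\<dots> = ennreal (B / lam)" by (rule exp_integral_atLeast[OF lam B])
  finally have "ennreal (measure M {\<omega> \<in> space M. X \<omega> \<ge> c}) \<le> ennreal (B / lam)"
    by (simp add: emeasure_eq_measure)
  then show ?thesis using B lam by (simp add: ennreal_le_iff)
qed


lemma pw_pos:
  fixes m c x :: real assumes m: "m \<ge> 0" and c: "c > 0" and x: "x \<ge> c"
  shows "x powr m * exp (-x/2) \<le> c powr m * exp (-c/2) * exp (-(1/2 - m/c)*(x-c))"
proof -
  have xp: "x > 0" using c x by simp
  have "ln (x/c) \<le> x/c - 1" using xp c by (intro ln_le_minus_one) simp
  then have lx: "ln x \<le> ln c + (x-c)/c" using xp c by (simp add: ln_divide_pos diff_divide_distrib)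
  have "m * ln x + (-x/2) \<le> m * ln c + (-c/2) + (-(1/2 - m/c)*(x-c))"
  proof -
    have "m * ln x \<le> m * (ln c + (x-c)/c)" by (rule mult_left_mono[OF lx m])
    then show ?thesis using c by (simp add: field_simps)
  qed
  then have "exp (m * ln x + (-x/2)) \<le> exp (m * ln c + (-c/2) + (-(1/2 - m/c)*(x-c)))" by (simp only: exp_le_cancel_iff)
  then show ?thesis using xp c by (simp only: exp_add powr_def) simp
qed

lemma Gs_bound_k:
  fixes d :: nat assumes d: "d \<ge> 1"
  shows "ln (2*pi)/2 \<le> Gs (real d / 2)"
proof (cases "even d")
  case True
  then obtain n where n: "d = 2*(n+1)" using d by (metis Suc_eq_plus1 dvd_def le_refl not0_implies_Suc not_one_le_zero mult_0_right)
  then have e: "real d / 2 = real n + 1" by simp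
  show ?thesis unfolding e using Gs_stirling_seq[of n] by simp
next
  case False
  then obtain n where n: "d = 2*n+1" using oddE by blast
  then have e: "real d / 2 = real n + 1/2" by simp
  show ?thesis unfolding e using Gs_stirling_seq[of n] by simp
qed

lemma stirling_lb:
  fixes k :: real assumes k: "k > 0" and G: "ln (2*pi)/2 \<le> Gs k"
  shows "sqrt (2*pi) * k powr k / sqrt k * exp (-k) \<le> Gamma k"
proof -
  have "ln (2*pi)/2 + (k - 1/2) * ln k - k \<le> ln (Gamma k)" using G unfolding Gs_def by simp
  then have "exp (ln (2*pi)/2 + (k - 1/2) * ln k - k) \<le> exp (ln (Gamma k))" by simp
  also have "\<dots> = Gamma k" using k by simp
  also have "exp (ln (2*pi)/2 + (k - 1/2) * ln k - k) = sqrt (2*pi) * k powr k / sqrt k * exp (-k)"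
  proof -
    have "exp (ln (2*pi)/2) = sqrt (2*pi)" by (simp add: powr_half_sqrt[symmetric] powr_def)
    moreover have "exp ((k - 1/2) * ln k) = k powr k / sqrt k"
      using k by (simp add: powr_def left_diff_distrib exp_diff powr_half_sqrt[symmetric])
    moreover have "exp (ln (2*pi)/2 + (k - 1/2) * ln k - k) = exp (ln (2*pi)/2) * exp ((k - 1/2) * ln k) * exp (-k)"
      by (simp add: exp_add[symmetric])
    ultimately show ?thesis by simp
  qed
  finally show ?thesis .
qed


lemma arith_ge2:
  fixes d t :: real assumes d: "d \<ge> 2" and t: "t > 0"
    and G: "sqrt (2*pi) * (d/2) powr (d/2) / sqrt (d/2) * exp (-(d/2)) \<le> Gamma (d/2)"
  shows "((d+t) powr (d/2 - 1) * exp (-(d+t)/2) / (2 powr (d/2) * Gamma (d/2))) / (1/2 - (d/2 - 1)/(d+t))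
    \<le> 1 / sqrt (2 * pi * (t - d * ln (1 + t / d))) * exp (- (t - d * ln (1 + t / d)) / 2)"
proof -
  define k where "k = d/2"
  define c where "c = d+t"
  define Z where "Z = t - d * ln (1 + t / d)"
  define K where "K = k powr k"
  define E where "E = exp (-k)"
  define Q where "Q = (c/d) powr k * exp (-t/2)"
  have kp: "k > 0" "k \<ge> 1" using d by (simp_all add: k_def)
  have cp: "c > 0" using d t by (simp add: c_def)
  have Gp: "Gamma k > 0" using kp by simp
  have Kp: "K > 0" using kp by (simp add: K_def)
  have Ep: "E > 0" by (simp add: E_def)
  have Qp: "Q > 0" using cp d by (simp add: Q_def)
  have Zp: "Z > 0"
  proof -
    have "ln (1 + t/d) < t/d" using t d by (intro ln_add_one_self_less_self) simp
    then have "d * ln (1 + t/d) < d * (t/d)" using d by (intro mult_strict_left_mono) auto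
    also have "d * (t/d) = t" using d by simp
    finally show ?thesis by (simp add: Z_def)
  qed
  have Zle: "Z * k \<le> t^2/4"
  proof -
    have "t/d - (t/d)^2/2 \<le> ln (1 + t/d)" using t d by (intro ln_lower2) simp
    then have "d * (t/d - (t/d)^2/2) \<le> d * ln (1 + t/d)" using d by simp
    moreover have "d * (t/d - (t/d)^2/2) = t - t^2/(2*d)" using d by (simp add: field_simps power2_eq_square)
    ultimately have "Z \<le> t^2/(2*d)" by (simp add: Z_def)
    then have "Z * k \<le> t^2/(2*d) * k" using kp by (intro mult_right_mono) auto
    also have "\<dots> = t^2/4" using d by (simp add: k_def)
    finally show ?thesis .
  qed
  have key: "2 * sqrt (Z * k) \<le> t + 2"
  proof -
    have "sqrt (4 * (Z * k)) \<le> sqrt ((t+2)^2)"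
      using Zle t by (intro real_sqrt_le_mono) (simp add: power2_eq_square algebra_simps)
    then show ?thesis using t by (simp add: real_sqrt_mult)
  qed
  have e1: "exp (- Z / 2) = Q"
  proof -
    have "1 + t/d = c/d" using d by (simp add: c_def field_simps)
    then have "- Z / 2 = k * ln (c/d) + (-t/2)" by (simp add: Z_def k_def field_simps)
    then have "exp (- Z / 2) = exp (k * ln (c/d) + (-t/2))" by (simp only:)
    also have "\<dots> = exp (k * ln (c/d)) * exp (-t/2)" by (rule exp_add)
    finally have "exp (- Z / 2) = exp (k * ln (c/d)) * exp (-t/2)" .
    then show ?thesis using cp d by (simp add: Q_def powr_def)
  qed
  have cpow: "c powr (k-1) = Q / exp (-t/2) * 2 powr k * K / c"
  proof -
    have "c powr (k-1) = c powr k / c" using cp by (simp add: powr_diff)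
    moreover have "(c/d) powr k = c powr k / d powr k" using cp d by (simp add: powr_divide)
    moreover have "d powr k = 2 powr k * K" using d by (simp add: K_def k_def powr_mult[symmetric])
    ultimately show ?thesis using d cp Kp by (simp add: Q_def)
  qed
  have ec: "exp (-c/2) = E * exp (-t/2)"
  proof -
    have "-c/2 = -k + (-t/2)" by (simp add: c_def k_def field_simps)
    then have "exp (-c/2) = exp (-k + (-t/2))" by (simp only:)
    also have "\<dots> = E * exp (-t/2)" unfolding E_def by (rule exp_add)
    finally show ?thesis .
  qed
  have lamE: "1/2 - (k-1)/c = (t+2)/(2*c)" using cp by (simp add: c_def k_def field_simps)
  have LHS: "(c powr (k - 1) * exp (-c/2) / (2 powr k * Gamma k)) / (1/2 - (k-1)/c) = 2 * K * Q * E / (Gamma k * (t+2))"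
    unfolding cpow ec lamE using cp t Gp by (simp add: field_simps)
  have S: "sqrt (2*pi) * K / sqrt k * E \<le> Gamma k" using G by (simp add: K_def E_def k_def)
  have m: "2 * K * E * sqrt (2*pi*Z) \<le> Gamma k * (t+2)"
  proof -
    have "2 * K * E * sqrt (2*pi*Z) = (sqrt (2*pi) * K / sqrt k * E) * (2 * sqrt (Z * k))"
      using kp Zp by (simp add: real_sqrt_mult field_simps)
    also have "\<dots> \<le> Gamma k * (t+2)"
      using S key Kp Ep kp Zp by (intro mult_mono) auto
    finally show ?thesis .
  qed
  have Zs: "sqrt (2*pi*Z) > 0" using Zp by simp
  have "2 * K * Q * E / (Gamma k * (t+2)) \<le> 1 / sqrt (2*pi*Z) * Q"
  proof -
    have "Q * (2 * K * E * sqrt (2*pi*Z)) \<le> Q * (Gamma k * (t+2))" using m Qp by simp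
    moreover have "t * Gamma k + Gamma k * 2 > 0" using Gp t by (simp add: add_pos_pos)
    ultimately show ?thesis using Zs Gp t Qp by (simp add: divide_simps algebra_simps)
  qed
  then show ?thesis using LHS e1 unfolding k_def c_def Z_def by simp
qed


lemma arith_1:
  fixes t :: real assumes t: "t > 0"
  shows "((1+t) powr (-1/2) * exp (-(1+t)/2) / (2 powr (1/2) * Gamma (1/2))) / (1/2)
    \<le> 1 / sqrt (2 * pi * (t - ln (1 + t))) * exp (- (t - ln (1 + t)) / 2)"
proof -
  define c where "c = 1 + t"
  define Z where "Z = t - ln c"
  have cp: "c > 1" using t by (simp add: c_def)
  have Zp: "Z > 0" using ln_add_one_self_less_self[OF t] by (simp add: Z_def c_def)
  have Zt: "Z \<le> t" using cp by (simp add: Z_def)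
  have e1: "exp (- Z / 2) = exp (-t/2) * sqrt c"
  proof -
    have "- Z / 2 = (-t/2) + ln c / 2" by (simp add: Z_def field_simps)
    then have "exp (- Z / 2) = exp (-t/2) * exp (ln c / 2)" by (simp add: exp_add[symmetric])
    moreover have "exp (ln c / 2) = sqrt c" using cp by (simp add: powr_half_sqrt[symmetric] powr_def)
    ultimately show ?thesis by simp
  qed
  have e2: "c powr (-1/2) = 1 / sqrt c" using cp by (simp add: powr_minus_divide powr_half_sqrt)
  have e3: "exp (-c/2) = exp (-1/2) * exp (-t/2)"
  proof -
    have "-c/2 = -1/2 + (-t/2)" by (simp add: c_def field_simps)
    then show ?thesis by (simp add: exp_add[symmetric])
  qed
  have e4: "2 powr (1/2) * Gamma (1/2) = sqrt (2*pi)" by (simp add: powr_half_sqrt Gamma_one_half_real real_sqrt_mult)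
  have key: "2 * exp (-1/2) * sqrt Z \<le> c"
  proof -
    have "exp (-1/2::real) \<le> 1" by simp
    moreover have "sqrt Z \<le> sqrt t" using Zt by simp
    moreover have "2 * sqrt t \<le> 1 + t"
    proof -
      have "0 \<le> (sqrt t - 1)^2" by simp
      then show ?thesis using t by (simp add: power2_eq_square algebra_simps)
    qed
    ultimately have "2 * exp (-1/2) * sqrt Z \<le> 2 * 1 * sqrt t"
      using Zp by (intro mult_mono) auto
    then show ?thesis using \<open>2 * sqrt t \<le> 1 + t\<close> by (simp add: c_def)
  qed
  have sc: "sqrt c > 0" using cp by simp
  have sZ: "sqrt (2*pi*Z) > 0" using Zp by simp
  have L: "(c powr (-1/2) * exp (-c/2) / (2 powr (1/2) * Gamma (1/2))) / (1/2)
     = 2 * exp (-1/2) * exp (-t/2) / (sqrt c * sqrt (2*pi))"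
    unfolding e2 e3 e4 by (simp add: field_simps)
  have "2 * exp (-1/2) * exp (-t/2) / (sqrt c * sqrt (2*pi)) \<le> 1 / sqrt (2*pi*Z) * (exp (-t/2) * sqrt c)"
  proof -
    have "2 * exp (-1/2) * sqrt Z * sqrt (2*pi) \<le> c * sqrt (2*pi)"
      using key by (intro mult_right_mono) auto
    then have "2 * exp (-1/2) * sqrt (2*pi*Z) \<le> c * sqrt (2*pi)"
      by (simp add: real_sqrt_mult algebra_simps)
    then have "exp (-t/2) * (2 * exp (-1/2) * sqrt (2*pi*Z)) \<le> exp (-t/2) * (c * sqrt (2*pi))"
      by (intro mult_left_mono) auto
    moreover have ss: "sqrt c * (sqrt c * sqrt (pi*2)) = c * sqrt (pi*2)" using cp by (simp add: mult.assoc[symmetric])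
    ultimately show ?thesis using sc sZ by (simp add: divide_simps algebra_simps) (metis ss)
  qed
  then show ?thesis using L e1 unfolding c_def Z_def by simp
qed

theorem lemma2:
  fixes M :: "'a measure" and X :: "'a \<Rightarrow> real" and d :: nat and t :: real
  assumes "prob_space M"
    and "distributed M lborel X (chi_square_density d)"
    and "d \<ge> 1"
    and "t > 0"
  shows "measure M {\<omega> \<in> space M. X \<omega> \<ge> real d + t}
    \<le> 1 / sqrt (2 * pi * (t - real d * ln (1 + t / real d)))
        * exp (- (t - real d * ln (1 + t / real d)) / 2)"
proof -
  note P = assms(1) and D = assms(2) and t = assms(4)
  consider "d = 1" | "d \<ge> 2" using assms(3) by linarith
  then show ?thesis
  proof cases
    case 1
    define c where "c = real d + t"
    define B where "B = c powr (-1/2) * exp (-c/2) / (2 powr (1/2) * Gamma (1/2))"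
    have cp: "c > 0" using t by (simp add: c_def)
    have Np: "2 powr (1/2) * Gamma (1/2::real) > 0" by simp
    have Bp: "B \<ge> 0" unfolding B_def using Np by simp
    have bnd: "chi_square_density d x \<le> B * exp (-(1/2)*(x-c))" if x: "x \<ge> c" for x
    proof -
      have xp: "x > 0" using x cp by simp
      have "x powr (-1/2) \<le> c powr (-1/2)" using x cp by (intro powr_mono2') auto
      moreover have "exp (-x/2) = exp (-c/2) * exp (-(1/2)*(x-c))"
      proof -
        have "-x/2 = -c/2 + (-(1/2)*(x-c))" by (simp add: field_simps)
        then show ?thesis by (simp add: exp_add[symmetric])
      qed
      ultimately have "x powr (-1/2) * exp (-x/2) \<le> c powr (-1/2) * exp (-c/2) * exp (-(1/2)*(x-c))"
        by (simp add: mult_right_mono)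
      then have "x powr (-1/2) * exp (-x/2) / (2 powr (1/2) * Gamma (1/2)) \<le> B * exp (-(1/2)*(x-c))"
        unfolding B_def using Np by (simp add: divide_right_mono)
      moreover have "chi_square_density d x = x powr (-1/2) * exp (-x/2) / (2 powr (1/2) * Gamma (1/2))"
        using xp 1 by (simp add: chi_square_density_def)
      ultimately show ?thesis by simp
    qed
    have "measure M {\<omega> \<in> space M. X \<omega> \<ge> c} \<le> B / (1/2)"
      by (rule tail_bound[OF P D _ Bp bnd]) simp_all
    also have "\<dots> \<le> 1 / sqrt (2 * pi * (t - ln (1 + t))) * exp (- (t - ln (1 + t)) / 2)"
      using arith_1[OF t] by (simp add: B_def c_def 1)
    finally show ?thesis by (simp add: c_def 1)
  next
    case 2
    define k where "k = real d / 2"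
    define c where "c = real d + t"
    define m where "m = k - 1"
    define lam where "lam = 1/2 - m/c"
    define N where "N = 2 powr k * Gamma k"
    define B where "B = c powr m * exp (-c/2) / N"
    have kp: "k \<ge> 1" using 2 by (simp add: k_def)
    have cp: "c > 0" using t by (simp add: c_def)
    have Np: "N > 0" using kp by (simp add: N_def)
    have Bp: "B \<ge> 0" unfolding B_def using Np by simp
    have lamp: "lam > 0"
    proof -
      have "2 * m < c" using t by (simp add: m_def k_def c_def)
      then have "m / c < 1/2" using cp by (simp add: divide_simps)
      then show ?thesis by (simp add: lam_def)
    qed
    have bnd: "chi_square_density d x \<le> B * exp (-lam*(x-c))" if x: "x \<ge> c" for x
    proof -
      have xp: "x > 0" using x cp by simp
      have "x powr m * exp (-x/2) \<le> c powr m * exp (-c/2) * exp (-(1/2 - m/c)*(x-c))"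
        using kp cp x by (intro pw_pos) (auto simp: m_def)
      then have "x powr m * exp (-x/2) / N \<le> B * exp (-lam*(x-c))"
        unfolding B_def lam_def using Np by (simp add: divide_right_mono)
      moreover have "chi_square_density d x = x powr m * exp (-x/2) / N"
        using xp by (simp add: chi_square_density_def m_def k_def N_def)
      ultimately show ?thesis by simp
    qed
    have "measure M {\<omega> \<in> space M. X \<omega> \<ge> c} \<le> B / lam"
      by (rule tail_bound[OF P D lamp Bp bnd])
    also have "\<dots> \<le> 1 / sqrt (2 * pi * (t - real d * ln (1 + t / real d))) * exp (- (t - real d * ln (1 + t / real d)) / 2)"
    proof -
      have G: "sqrt (2*pi) * (real d/2) powr (real d/2) / sqrt (real d/2) * exp (-(real d/2)) \<le> Gamma (real d/2)"
        using stirling_lb[OF _ Gs_bound_k[OF assms(3)]] 2 by simp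
      have "real d \<ge> 2" using 2 by simp
      from arith_ge2[OF this t G] show ?thesis
        by (simp add: B_def lam_def m_def k_def c_def N_def)
    qed
    finally show ?thesis by (simp add: c_def)
  qed
qed

end
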